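(* Let $Y,\widehat{Y},A$ be $\{0,1\}$-valued random variables on a common probability space, with $\Pr\{A=a,Y=y\}>0$ for all $a,y\in\{0,1\}$. For $a\in\{0,1\}$ let $P_a(\widehat{Y})=\mathrm{convhull}\{(0,0),\gamma_a(\widehat{Y}),\gamma_a(1-\widehat{Y}),(1,1)\}\subseteq\mathbb{R}^2$. Then: (i) every predictor $\widetilde{Y}$ derived from $(\widehat{Y},A)$ satisfies $\gamma_a(\widetilde{Y})\in P_a(\widehat{Y})$ for all $a\in\{0,1\}$; and (ii) conversely, for any points $g_0\in P_0(\widehat{Y})$ and $g_1\in P_1(\widehat{Y})$ there exists a predictor $\widetilde{Y}$ derived from $(\widehat{Y},A)$ with $\gamma_0(\widetilde{Y})=g_0$ and $\gamma_1(\widetilde{Y})=g_1$.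
   Context: For a $\{0,1\}$-valued predictor $Z$ and $a\in\{0,1\}$, $\gamma_a(Z)=\left(\Pr\{Z=1\mid A=a,Y=0\},\ \Pr\{Z=1\mid A=a,Y=1\}\right)$ (false positive rate and true positive rate within the group $A=a$). A predictor $\widetilde{Y}\in\{0,1\}$ is derived from $(\widehat{Y},A)$ if it is a possibly randomized function of $(\widehat{Y},A)$ alone, with the randomization independent of everything else; equivalently it is specified by the four numbers $\Pr\{\widetilde{Y}=1\mid \widehat{Y}=\hat y,A=a\}\in[0,1]$, $\hat y,a\in\{0,1\}$. *)

theory Defs
  imports "HOL-Analysis.Analysis" "HOL-Probability.Probability"
begin

text \<open>Values in {0,1} are encoded as bool (True = 1). The joint law of the
  triple (A, Y, Yhat) is a pmf on bool \<times> bool \<times> bool.\<close>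

definition cond_prob :: "'w pmf \<Rightarrow> ('w \<Rightarrow> bool) \<Rightarrow> ('w \<Rightarrow> bool) \<Rightarrow> real" where
  "cond_prob M P Q =
     measure_pmf.prob M {w. P w \<and> Q w} / measure_pmf.prob M {w. Q w}"

definition gamma :: "'w pmf \<Rightarrow> ('w \<Rightarrow> bool) \<Rightarrow> ('w \<Rightarrow> bool) \<Rightarrow> ('w \<Rightarrow> bool) \<Rightarrow> bool \<Rightarrow> real \<times> real" where
  "gamma M A Y Z a =
     (cond_prob M Z (\<lambda>w. A w = a \<and> \<not> Y w), cond_prob M Z (\<lambda>w. A w = a \<and> Y w))"

definition varA :: "bool \<times> bool \<times> bool \<Rightarrow> bool" where "varA w = fst w"
definition varY :: "bool \<times> bool \<times> bool \<Rightarrow> bool" where "varY w = fst (snd w)"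
definition varYh :: "bool \<times> bool \<times> bool \<Rightarrow> bool" where "varYh w = snd (snd w)"

text \<open>A derived predictor is given by t yh a = Pr{Ytilde=1 | Yhat=yh, A=a}, with
  independent randomization. Its joint law with (A, Y, Yhat) is the following pmf
  on quadruples (A, Y, Yhat, Ytilde).\<close>
definition derived_joint :: "(bool \<times> bool \<times> bool) pmf \<Rightarrow> (bool \<Rightarrow> bool \<Rightarrow> real)
     \<Rightarrow> (bool \<times> bool \<times> bool \<times> bool) pmf" where
  "derived_joint p t =
     bind_pmf p (\<lambda>(a, y, yh). map_pmf (\<lambda>z. (a, y, yh, z)) (bernoulli_pmf (t yh a)))"

definition dA :: "bool \<times> bool \<times> bool \<times> bool \<Rightarrow> bool" where "dA w = fst w"
definition dY :: "bool \<times> bool \<times> bool \<times> bool \<Rightarrow> bool" where "dY w = fst (snd w)"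
definition dYt :: "bool \<times> bool \<times> bool \<times> bool \<Rightarrow> bool" where "dYt w = snd (snd (snd w))"

definition polyP :: "(bool \<times> bool \<times> bool) pmf \<Rightarrow> bool \<Rightarrow> (real \<times> real) set" where
  "polyP p a = convex hull {(0, 0), gamma p varA varY varYh a,
                            gamma p varA varY (\<lambda>w. \<not> varYh w) a, (1, 1)}"

end

theory Submission
  imports Defs
begin
lemma pmf_dj:
  assumes "\<And>yh a. 0 \<le> t yh a \<and> t yh a \<le> 1"
  shows "pmf (derived_joint p t) (a,y,yh,z) = pmf p (a,y,yh) * (if z then t yh a else 1 - t yh a)"
proof -
  have "pmf (derived_joint p t) (a,y,yh,z) = (\<Sum>w\<in>UNIV. pmf (case w of (a, y, yh) \<Rightarrow> map_pmf (\<lambda>z. (a, y, yh, z)) (bernoulli_pmf (t yh a))) (a,y,yh,z) * pmf p w)"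
    unfolding derived_joint_def pmf_bind
    by (rule integral_measure_pmf_real[where A=UNIV]) auto
  also have "\<dots> = (\<Sum>w\<in>UNIV. if w = (a,y,yh) then pmf p (a,y,yh) * (if z then t yh a else 1 - t yh a) else 0)"
  proof (rule sum.cong)
    fix w :: "bool\<times>bool\<times>bool" 
    obtain a' y' yh' where w: "w = (a',y',yh')" by (cases w) auto
    have inj: "inj (\<lambda>z. (a', y', yh', z))" by (auto simp: inj_def)
    show "pmf (case w of (a, y, yh) \<Rightarrow> map_pmf (\<lambda>z. (a, y, yh, z)) (bernoulli_pmf (t yh a))) (a,y,yh,z) * pmf p w = (if w = (a,y,yh) then pmf p (a,y,yh) * (if z then t yh a else 1 - t yh a) else 0)"
    proof (cases "(a',y',yh') = (a,y,yh)")
      case True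
      have "pmf (map_pmf (\<lambda>z. (a, y, yh, z)) (bernoulli_pmf (t yh a))) ((\<lambda>z. (a, y, yh, z)) z) = pmf (bernoulli_pmf (t yh a)) z"
        by (rule pmf_map_inj') (auto simp: inj_def)
      then show ?thesis using True assms[of yh a] w by auto
    next
      case False
      then show ?thesis using w by (auto intro!: pmf_map_outside)
    qed
  qed simp
  also have "\<dots> = pmf p (a,y,yh) * (if z then t yh a else 1 - t yh a)" by simp
  finally show ?thesis .
qed
lemma hull_char:
  fixes G H :: "real \<times> real"
  assumes GH: "G + H = (1,1)"
  shows "x \<in> convex hull {(0,0), G, H, (1,1)} \<longleftrightarrow>
         (\<exists>s r. 0 \<le> s \<and> s \<le> 1 \<and> 0 \<le> r \<and> r \<le> 1 \<and> x = s *\<^sub>R G + r *\<^sub>R H)"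
proof
  assume "x \<in> convex hull {(0,0), G, H, (1,1)}"
  then obtain u v b where uv: "u \<ge> 0" "v \<ge> 0" "u + v = 1" and b: "b \<in> convex hull {G, H, (1,1)}"
      and x: "x = u *\<^sub>R (0,0) + v *\<^sub>R b"
    by (subst (asm) convex_hull_insert) auto
  from b obtain aa bb cc where abc: "0 \<le> aa" "0 \<le> bb" "0 \<le> cc" "aa + bb + cc = 1"
     and b': "b = aa *\<^sub>R G + bb *\<^sub>R H + cc *\<^sub>R (1,1)"
    unfolding convex_hull_3 by auto
  have "x = (v * aa + v * cc) *\<^sub>R G + (v * bb + v * cc) *\<^sub>R H"
    unfolding x b' GH[symmetric] by (simp add: algebra_simps zero_prod_def[symmetric])
  moreover have "0 \<le> v * aa + v * cc" "v * aa + v * cc \<le> 1" "0 \<le> v * bb + v * cc" "v * bb + v * cc \<le> 1"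
    using uv abc by (auto simp: mult_le_one simp flip: distrib_left intro!: mult_le_one)
  ultimately show "\<exists>s r. 0 \<le> s \<and> s \<le> 1 \<and> 0 \<le> r \<and> r \<le> 1 \<and> x = s *\<^sub>R G + r *\<^sub>R H" by blast
next
  assume "\<exists>s r. 0 \<le> s \<and> s \<le> 1 \<and> 0 \<le> r \<and> r \<le> 1 \<and> x = s *\<^sub>R G + r *\<^sub>R H"
  then obtain s r where sr: "0 \<le> s" "s \<le> 1" "0 \<le> r" "r \<le> 1" and x: "x = s *\<^sub>R G + r *\<^sub>R H" by blast
  show "x \<in> convex hull {(0,0), G, H, (1,1)}"
  proof (cases "r \<le> s")
    case True
    have "x = (1 - s) *\<^sub>R (0,0) + (s - r) *\<^sub>R G + r *\<^sub>R (1,1)"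
      unfolding x GH[symmetric] by (simp add: algebra_simps zero_prod_def[symmetric])
    then have "x \<in> convex hull {(0,0), G, (1,1)}"
      unfolding convex_hull_3 using sr True by (intro CollectI exI[of _ "1-s"] exI[of _ "s-r"] exI[of _ r]) auto
    moreover have "convex hull {(0,0), G, (1,1)} \<subseteq> convex hull {(0,0), G, H, (1::real,1::real)}"
      by (rule hull_mono) auto
    ultimately show ?thesis by blast
  next
    case False
    have "x = (1 - r) *\<^sub>R (0,0) + (r - s) *\<^sub>R H + s *\<^sub>R (1,1)"
      unfolding x GH[symmetric] by (simp add: algebra_simps zero_prod_def[symmetric])
    then have "x \<in> convex hull {(0,0), H, (1,1)}"
      unfolding convex_hull_3 using sr False by (intro CollectI exI[of _ "1-r"] exI[of _ "r-s"] exI[of _ s]) auto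
    moreover have "convex hull {(0,0), H, (1,1)} \<subseteq> convex hull {(0,0), G, H, (1::real,1::real)}"
      by (rule hull_mono) auto
    ultimately show ?thesis by blast
  qed
qed
lemma probP:
  "measure_pmf.prob p {w. varYh w \<and> (varA w = a \<and> varY w = y)} = pmf p (a,y,True)"
  "measure_pmf.prob p {w. \<not> varYh w \<and> (varA w = a \<and> varY w = y)} = pmf p (a,y,False)"
  "measure_pmf.prob p {w. varA w = a \<and> varY w = y} = pmf p (a,y,True) + pmf p (a,y,False)"
proof -
  have "{w. varYh w \<and> (varA w = a \<and> varY w = y)} = {(a,y,True)}"
    by (auto simp: varYh_def varA_def varY_def)
  then show "measure_pmf.prob p {w. varYh w \<and> (varA w = a \<and> varY w = y)} = pmf p (a,y,True)"
    by (simp add: measure_pmf_single)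
  have "{w. \<not> varYh w \<and> (varA w = a \<and> varY w = y)} = {(a,y,False)}"
    by (auto simp: varYh_def varA_def varY_def)
  then show "measure_pmf.prob p {w. \<not> varYh w \<and> (varA w = a \<and> varY w = y)} = pmf p (a,y,False)"
    by (simp add: measure_pmf_single)
  have "{w. varA w = a \<and> varY w = y} = {(a,y,True), (a,y,False)}"
    by (auto simp: varYh_def varA_def varY_def)
  then show "measure_pmf.prob p {w. varA w = a \<and> varY w = y} = pmf p (a,y,True) + pmf p (a,y,False)"
    by (simp add: measure_measure_pmf_finite)
qed

lemma probD:
  assumes t: "\<And>yh a. 0 \<le> t yh a \<and> t yh a \<le> 1"
  shows
  "measure_pmf.prob (derived_joint p t) {w. dYt w \<and> (dA w = a \<and> dY w = y)} = pmf p (a,y,True) * t True a + pmf p (a,y,False) * t False a"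
  "measure_pmf.prob (derived_joint p t) {w. dA w = a \<and> dY w = y} = pmf p (a,y,True) + pmf p (a,y,False)"
proof -
  have "{w. dYt w \<and> (dA w = a \<and> dY w = y)} = {(a,y,True,True), (a,y,False,True)}"
    by (auto simp: dA_def dY_def dYt_def)
  then show "measure_pmf.prob (derived_joint p t) {w. dYt w \<and> (dA w = a \<and> dY w = y)} = pmf p (a,y,True) * t True a + pmf p (a,y,False) * t False a"
    by (simp add: measure_measure_pmf_finite pmf_dj[OF t])
  have "{w. dA w = a \<and> dY w = y} = {(a,y,True,True), (a,y,False,True), (a,y,True,False), (a,y,False,False)}"
    by (auto simp: dA_def dY_def dYt_def)
  then show "measure_pmf.prob (derived_joint p t) {w. dA w = a \<and> dY w = y} = pmf p (a,y,True) + pmf p (a,y,False)"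
    by (simp add: measure_measure_pmf_finite pmf_dj[OF t] algebra_simps)
qed

lemma gammas:
  assumes pos: "\<And>a y. measure_pmf.prob p {w. varA w = a \<and> varY w = y} > 0"
  shows "gamma p varA varY varYh a + gamma p varA varY (\<lambda>w. \<not> varYh w) a = (1,1)"
proof -
  have q: "pmf p (a,y,True) + pmf p (a,y,False) > 0" for y using pos[of a y] probP(3)[of p a y] by simp
  show ?thesis
    unfolding gamma_def cond_prob_def
    using probP[of p a False] probP[of p a True] q[of False] q[of True]
    by (simp add: add_divide_distrib[symmetric])
qed

lemma gamma_dj:
  assumes pos: "\<And>a y. measure_pmf.prob p {w. varA w = a \<and> varY w = y} > 0"
  and t: "\<And>yh a. 0 \<le> t yh a \<and> t yh a \<le> 1"
  shows "gamma (derived_joint p t) dA dY dYt a = t True a *\<^sub>R gamma p varA varY varYh a + t False a *\<^sub>R gamma p varA varY (\<lambda>w. \<not> varYh w) a"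
proof -
  have q: "pmf p (a,y,True) + pmf p (a,y,False) > 0" for y using pos[of a y] probP(3)[of p a y] by simp
  show ?thesis
    unfolding gamma_def cond_prob_def
    using probP[of p a False] probP[of p a True] q[of False] q[of True]
      probD[OF t, where p=p and a=a and y=False] probD[OF t, where p=p and a=a and y=True]
    by (simp add: add_divide_distrib algebra_simps)
qed

theorem lemma4p3:
  fixes p :: "(bool \<times> bool \<times> bool) pmf"
  assumes pos: "\<And>a y. measure_pmf.prob p {w. varA w = a \<and> varY w = y} > 0"
  shows "(\<forall>t. (\<forall>yh a. 0 \<le> t yh a \<and> t yh a \<le> 1) \<longrightarrow>
            (\<forall>a. gamma (derived_joint p t) dA dY dYt a \<in> polyP p a))
       \<and> (\<forall>g0 g1. g0 \<in> polyP p False \<and> g1 \<in> polyP p True \<longrightarrow>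
            (\<exists>t. (\<forall>yh a. 0 \<le> t yh a \<and> t yh a \<le> 1) \<and>
                 gamma (derived_joint p t) dA dY dYt False = g0 \<and>
                 gamma (derived_joint p t) dA dY dYt True = g1))"
proof (intro conjI allI impI)
  fix t :: "bool \<Rightarrow> bool \<Rightarrow> real" and a
  assume t: "\<forall>yh a. 0 \<le> t yh a \<and> t yh a \<le> 1"
  show "gamma (derived_joint p t) dA dY dYt a \<in> polyP p a"
    unfolding polyP_def hull_char[OF gammas[OF pos]] gamma_dj[OF pos t[rule_format]]
    using t by blast
next
  fix g0 g1
  assume g: "g0 \<in> polyP p False \<and> g1 \<in> polyP p True"
  obtain s0 r0 where sr0: "0 \<le> s0" "s0 \<le> 1" "0 \<le> r0" "r0 \<le> 1"
    and g0: "g0 = s0 *\<^sub>R gamma p varA varY varYh False + r0 *\<^sub>R gamma p varA varY (\<lambda>w. \<not> varYh w) False"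
    using g unfolding polyP_def hull_char[OF gammas[OF pos]] by blast
  obtain s1 r1 where sr1: "0 \<le> s1" "s1 \<le> 1" "0 \<le> r1" "r1 \<le> 1"
    and g1: "g1 = s1 *\<^sub>R gamma p varA varY varYh True + r1 *\<^sub>R gamma p varA varY (\<lambda>w. \<not> varYh w) True"
    using g unfolding polyP_def hull_char[OF gammas[OF pos]] by blast
  define t where "t yh a = (if a then (if yh then s1 else r1) else (if yh then s0 else r0))" for yh a
  have t: "\<And>yh a. 0 \<le> t yh a \<and> t yh a \<le> 1" using sr0 sr1 by (auto simp: t_def)
  show "\<exists>t. (\<forall>yh a. 0 \<le> t yh a \<and> t yh a \<le> 1) \<and>
                 gamma (derived_joint p t) dA dY dYt False = g0 \<and>
                 gamma (derived_joint p t) dA dY dYt True = g1"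
    by (rule exI[of _ t]) (use sr0 sr1 in \<open>simp add: t gamma_dj[OF pos t] g0 g1 t_def\<close>)
qed
end
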